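(* Let $G=(V,E)$ be a simple connected graph with $N\ge 2$ nodes. For the Mellin transform with parameter $s>0$ let $w_{ij}=d_{ij}^{-s}$ for all pairs $i\neq j$, and for the Laplace transform with parameter $\lambda>0$ let $w_{ij}=e^{-\lambda d_{ij}}$ if $d_{ij}>1$ and $w_{ij}=1$ if $(i,j)\in E$. Let $\tilde{L}_\tau(G,w)$ be the corresponding transformed $d$-path Laplacian, i.e. the weighted Laplacian with off-diagonal entries $-w_{ij}$ and diagonal entries $\sum_{j\neq i}w_{ij}$ (equivalently $\sum_{d=1}^{d_{max}}d^{-s}L_d$ in the Mellin case and $L+\sum_{d=2}^{d_{max}}e^{-\lambda d}L_d$ in the Laplace case), and let $\lambda_2(G,w)$ and $\lambda_N(G,w)$ be its second smallest and largest eigenvalues. If $s'<s$ (Mellin case) or $\lambda'<\lambda$ (Laplace case), and $w'$ denotes the weights with parameter $s'$ (resp. $\lambda'$), then $\lambda_2(G,w')\ge\lambda_2(G,w)$ and $\lambda_N(G,w')\ge\lambda_N(G,w)$. That is, $\lambda_2(G,w)$ and $\lambda_N(G,w)$ are non-increasing in $s$ (resp. $\lambda$).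
   Context: $d_{ij}$ is the shortest-path distance between nodes $i,j$ in $G$ and $d_{max}$ the diameter. $L$ is the usual graph Laplacian. For $1\le d\le d_{max}$, $L_d$ is the $N\times N$ matrix with $(L_d)_{ij}=-1$ if $i\ne j$ and $d_{ij}=d$, $0$ for other off-diagonal entries, and $(L_d)_{ii}$ equal to the number of nodes at distance $d$ from $i$. Eigenvalues are ordered $0=\lambda_1\le\lambda_2\le\cdots\le\lambda_N$. *)

theory Defs
  imports "Jordan_Normal_Form.Char_Poly" "HOL-Library.Multiset"
begin

definition is_walk :: "(nat \<Rightarrow> nat \<Rightarrow> bool) \<Rightarrow> nat \<Rightarrow> nat list \<Rightarrow> bool" where
  "is_walk E N xs \<longleftrightarrow> xs \<noteq> [] \<and> set xs \<subseteq> {..<N} \<and>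
     (\<forall>k. k + 1 < length xs \<longrightarrow> E (xs ! k) (xs ! (k + 1)))"

definition simple_graph :: "(nat \<Rightarrow> nat \<Rightarrow> bool) \<Rightarrow> nat \<Rightarrow> bool" where
  "simple_graph E N \<longleftrightarrow> (\<forall>i j. E i j \<longrightarrow> i < N \<and> j < N) \<and>
     (\<forall>i j. E i j \<longrightarrow> E j i) \<and> (\<forall>i. \<not> E i i)"

definition graph_connected :: "(nat \<Rightarrow> nat \<Rightarrow> bool) \<Rightarrow> nat \<Rightarrow> bool" where
  "graph_connected E N \<longleftrightarrow> (\<forall>i<N. \<forall>j<N. \<exists>xs. is_walk E N xs \<and> hd xs = i \<and> last xs = j)"

definition gdist :: "(nat \<Rightarrow> nat \<Rightarrow> bool) \<Rightarrow> nat \<Rightarrow> nat \<Rightarrow> nat \<Rightarrow> nat" where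
  "gdist E N i j = (LEAST k. \<exists>xs. is_walk E N xs \<and> hd xs = i \<and> last xs = j \<and> length xs = k + 1)"

definition wlaplacian :: "nat \<Rightarrow> (nat \<Rightarrow> nat \<Rightarrow> real) \<Rightarrow> real mat" where
  "wlaplacian N w = mat N N (\<lambda>(i, j). if i = j then (\<Sum>k\<in>{..<N} - {i}. w i k) else - w i j)"

definition mellin_weight :: "(nat \<Rightarrow> nat \<Rightarrow> bool) \<Rightarrow> nat \<Rightarrow> real \<Rightarrow> nat \<Rightarrow> nat \<Rightarrow> real" where
  "mellin_weight E N s i j = real (gdist E N i j) powr (- s)"

definition laplace_weight :: "(nat \<Rightarrow> nat \<Rightarrow> bool) \<Rightarrow> nat \<Rightarrow> real \<Rightarrow> nat \<Rightarrow> nat \<Rightarrow> real" where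
  "laplace_weight E N l i j = (if E i j then 1 else exp (- l * real (gdist E N i j)))"

definition sorted_eigenvalues :: "real mat \<Rightarrow> real list" where
  "sorted_eigenvalues A = sorted_list_of_multiset (proots (char_poly A))"

text \<open>k-th smallest eigenvalue, 1-based: lambda_1 <= ... <= lambda_N.\<close>
definition eigval :: "real mat \<Rightarrow> nat \<Rightarrow> real" where
  "eigval A k = sorted_eigenvalues A ! (k - 1)"

end

theory Submission
  imports Defs "Jordan_Normal_Form.Schur_Decomposition"
begin


lemma sym_real_eigenvalue:
  fixes A :: "real mat"
  assumes A: "A \<in> carrier_mat n n" and sym: "transpose_mat A = A" and n: "n > 0"
  shows "\<exists>e. eigenvalue A e"
proof -
  let ?C = "map_mat complex_of_real A"
  have C: "?C \<in> carrier_mat n n" using A by auto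
  have deg: "degree (char_poly ?C) = n" using degree_monic_char_poly[OF C] by auto
  then obtain z where z: "poly (char_poly ?C) z = 0"
    using fundamental_theorem_of_algebra constant_degree n by (metis neq0_conv)
  hence "eigenvalue ?C z" using eigenvalue_root_char_poly[OF C] by auto
  then obtain w where w: "eigenvector ?C w z" unfolding eigenvalue_def by auto
  hence wc: "w \<in> carrier_vec n" "w \<noteq> 0\<^sub>v n" "?C *\<^sub>v w = z \<cdot>\<^sub>v w" unfolding eigenvector_def using C by auto
  define s where "s = (\<Sum>i<n. cnj (w$i) * (?C *\<^sub>v w)$i)"
  define r where "r = (\<Sum>i<n. cnj (w$i) * w$i)"
  have s1: "s = z * r" unfolding s_def r_def wc(3) using wc(1)
    by (simp add: sum_distrib_left mult_ac)
  have s2: "s = (\<Sum>i<n. \<Sum>j<n. cnj (w$i) * of_real (A$$(i,j)) * w$j)"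
    unfolding s_def using A wc(1)
    by (auto simp: scalar_prod_def sum_distrib_left mult_ac intro!: sum.cong)
  have "cnj s = (\<Sum>i<n. \<Sum>j<n. w$i * of_real (A$$(i,j)) * cnj (w$j))"
    unfolding s2 by simp
  also have "\<dots> = (\<Sum>j<n. \<Sum>i<n. w$i * of_real (A$$(i,j)) * cnj (w$j))"
    by (rule sum.swap)
  also have "\<dots> = s" unfolding s2
  proof (intro sum.cong refl)
    fix i j assume "i \<in> {..<n}" "j \<in> {..<n}"
    hence "A $$ (j,i) = A $$ (i,j)" using sym A
      by (metis carrier_matD(1) carrier_matD(2) index_transpose_mat(1) lessThan_iff)
    thus "w$j * of_real (A$$(j,i)) * cnj (w$i) = cnj (w$i) * of_real (A$$(i,j)) * w$j"
      by (simp add: mult_ac)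
  qed
  finally have cs: "cnj s = s" .
  have rr: "r = of_real (\<Sum>i<n. (norm (w$i))^2)"
    unfolding r_def of_real_sum by (intro sum.cong refl) (metis complex_norm_square mult.commute)
  obtain i where i: "i < n" "w $ i \<noteq> 0" using wc(1,2) by force
  have "(\<Sum>i<n. (norm (w$i))^2) > 0"
    by (rule sum_pos2[of _ i]) (use i in auto)
  hence r0: "r \<noteq> 0" unfolding rr by (metis of_real_eq_0_iff less_irrefl)
  have "cnj r = r" unfolding rr by (rule complex_cnj_complex_of_real)
  hence "cnj z * r = z * r" using cs s1 by (metis complex_cnj_mult)
  hence zz: "cnj z = z" using r0 by simp
  have zr: "z = of_real (Re z)" using zz by (metis Reals_cnj_iff complex_is_Real_iff of_real_Re)
  have "char_poly ?C = map_poly of_real (char_poly A)" by (rule of_real_hom.char_poly_hom[OF A])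
  hence "complex_of_real (poly (char_poly A) (Re z)) = 0" using z zr by (metis of_real_hom.poly_map_poly)
  hence "poly (char_poly A) (Re z) = 0" by simp
  thus ?thesis using eigenvalue_root_char_poly[OF A] by blast
qed



lemma conj_real_vec[simp]: "conjugate (v :: real vec) = v"
  by (rule eq_vecI) (auto simp: conjugate_vec_def)

lemma orth_completion:
  fixes v :: "real vec"
  assumes v: "v \<in> carrier_vec n" and v1: "v \<bullet> v = 1"
  shows "\<exists>W. W \<in> carrier_mat n n \<and> transpose_mat W * W = 1\<^sub>m n \<and> col W 0 = v"
proof -
  interpret cof_vec_space n "TYPE(real)" .
  have v0: "v \<noteq> 0\<^sub>v n" using v1 by auto
  define b where "b = basis_completion v"
  note bc = basis_completion[OF v v0, folded b_def]
  have n: "n > 0" using v0 v by (metis carrier_vecD gr0I vec_of_dim_0)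
  then obtain vs where bv: "b = v # vs" using bc(6,7) by (cases b) auto
  define ws where "ws = gram_schmidt n b"
  note gs = gram_schmidt_result[OF bc(2) bc(4) bc(5) ws_def]
  have hd: "hd ws = v" unfolding ws_def bv by (rule gram_schmidt_hd[OF v])
  have lws: "length ws = n" using gs(4) bc(6) by simp
  have wsc: "\<And>i. i < n \<Longrightarrow> ws ! i \<in> carrier_vec n" using gs(3) lws by auto
  have orth: "\<And>i j. i < n \<Longrightarrow> j < n \<Longrightarrow> (ws!i \<bullet> ws!j = 0) = (i \<noteq> j)"
    using gs(2) lws unfolding corthogonal_def by simp
  define us where "us = map (\<lambda>w. (1 / sqrt (w \<bullet> w)) \<cdot>\<^sub>v w) ws"
  have lus: "length us = n" unfolding us_def using lws by simp
  have usc: "\<And>i. i < n \<Longrightarrow> us ! i \<in> carrier_vec n" unfolding us_def using wsc lws by simp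
  have pos: "\<And>i. i < n \<Longrightarrow> ws!i \<bullet> ws!i > 0"
  proof -
    fix i assume i: "i < n"
    have "ws!i \<bullet> ws!i \<ge> 0" unfolding scalar_prod_def by (auto intro: sum_nonneg)
    moreover have "ws!i \<bullet> ws!i \<noteq> 0" using orth[OF i i] by simp
    ultimately show "ws!i \<bullet> ws!i > 0" by simp
  qed
  have usp: "\<And>i j. i < n \<Longrightarrow> j < n \<Longrightarrow> us!i \<bullet> us!j = (if i = j then 1 else 0)"
  proof -
    fix i j assume i: "i < n" and j: "j < n"
    have "us!i \<bullet> us!j = (1 / sqrt (ws!i \<bullet> ws!i)) * (1 / sqrt (ws!j \<bullet> ws!j)) * (ws!i \<bullet> ws!j)"
      unfolding us_def using i j lws wsc[OF i] wsc[OF j] by simp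
    also have "\<dots> = (if i = j then 1 else 0)"
    proof (cases "i = j")
      case True
      have p: "ws!i \<bullet> ws!i > 0" using pos[OF i] .
      have "(1 / sqrt (ws!i \<bullet> ws!i)) * (1 / sqrt (ws!i \<bullet> ws!i)) * (ws!i \<bullet> ws!i) = 1"
        using p by (simp add: field_simps)
      thus ?thesis using True by simp
    next
      case False
      thus ?thesis using orth[OF i j] by simp
    qed
    finally show "us!i \<bullet> us!j = (if i = j then 1 else 0)" .
  qed
  define W where "W = mat_of_cols n us"
  have W: "W \<in> carrier_mat n n" unfolding W_def using mat_of_cols_carrier(1)[of n us] lus by simp
  have colW: "\<And>j. j < n \<Longrightarrow> col W j = us ! j" unfolding W_def using lus usc by simp
  have "transpose_mat W * W = 1\<^sub>m n"
    by (rule eq_matI, insert W colW usp, auto)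
  moreover have "col W 0 = v"
  proof -
    have "ws ! 0 = v" using hd lws n by (metis hd_conv_nth list.size(3) not_less_zero)
    hence "us ! 0 = (1 / sqrt (v \<bullet> v)) \<cdot>\<^sub>v v" unfolding us_def using lws n by simp
    thus ?thesis using colW[OF n] v1 by simp
  qed
  ultimately show ?thesis using W by blast
qed



definition dmat :: "real list \<Rightarrow> real mat" where
  "dmat es = mat (length es) (length es) (\<lambda>(i,j). if i = j then es!i else 0)"

lemma dmat_carrier[simp]: "dmat es \<in> carrier_mat (length es) (length es)"
  unfolding dmat_def by simp

lemma conj_form:
  assumes W: "W \<in> carrier_mat n n" and A: "A \<in> carrier_mat n n" and i: "i < n" and j: "j < n"
  shows "(transpose_mat W * A * W) $$ (i,j) = col W i \<bullet> (A *\<^sub>v col W j)"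
proof -
  have "(transpose_mat W * A * W) $$ (i,j) = (transpose_mat W * (A * W)) $$ (i,j)"
    using W A by (metis assoc_mult_mat transpose_carrier_mat)
  also have "(transpose_mat W * (A * W)) $$ (i,j) = row (transpose_mat W) i \<bullet> col (A * W) j"
    by (rule index_mult_mat(1)) (use W A i j in auto)
  also have "row (transpose_mat W) i = col W i" using W i by simp
  also have "col (A * W) j = A *\<^sub>v col W j" by (rule col_mult2[OF A W j])
  finally show ?thesis .
qed

lemma spectral:
  fixes A :: "real mat"
  assumes "A \<in> carrier_mat n n" and "transpose_mat A = A"
  shows "\<exists>U es. U \<in> carrier_mat n n \<and> transpose_mat U * U = 1\<^sub>m n \<and> length es = n
     \<and> A = U * dmat es * transpose_mat U"
  using assms
proof (induction n arbitrary: A)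
  case 0
  show ?case
    by (rule exI[of _ "1\<^sub>m 0"], rule exI[of _ "[]"], insert 0(1), auto intro!: eq_matI)
next
  case (Suc m A)
  let ?n = "Suc m"
  have A: "A \<in> carrier_mat ?n ?n" and sym: "transpose_mat A = A" by fact+
  obtain e where ev: "eigenvalue A e" using sym_real_eigenvalue[OF A sym] by auto
  define v0 where "v0 = find_eigenvector A e"
  have v0: "v0 \<in> carrier_vec ?n" "v0 \<noteq> 0\<^sub>v ?n" "A *\<^sub>v v0 = e \<cdot>\<^sub>v v0"
    using find_eigenvector[OF A ev, folded v0_def] A unfolding eigenvector_def by auto
  have p: "v0 \<bullet> v0 > 0"
  proof -
    obtain i where i: "i < ?n" "v0 $ i \<noteq> 0" using v0(1,2) by force
    have "v0 \<bullet> v0 = (\<Sum>k<?n. (v0$k)^2)" using v0(1)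
      unfolding scalar_prod_def by (simp add: power2_eq_square lessThan_atLeast0)
    also have "\<dots> > 0" by (rule sum_pos2[of _ i]) (use i in auto)
    finally show ?thesis .
  qed
  define v where "v = (1 / sqrt (v0 \<bullet> v0)) \<cdot>\<^sub>v v0"
  have vc: "v \<in> carrier_vec ?n" unfolding v_def using v0 by simp
  have v1: "v \<bullet> v = 1" unfolding v_def using v0(1) p by (simp add: field_simps)
  have Av: "A *\<^sub>v v = e \<cdot>\<^sub>v v" unfolding v_def using v0 A
    by (simp add: mult_mat_vec smult_smult_assoc mult.commute)
  obtain W where W: "W \<in> carrier_mat ?n ?n" and WW: "transpose_mat W * W = 1\<^sub>m ?n"
    and W0: "col W 0 = v" using orth_completion[OF vc v1] by blast
  have WW': "W * transpose_mat W = 1\<^sub>m ?n"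
    by (rule mat_mult_left_right_inverse[OF _ W WW]) (use W in simp)
  define A1 where "A1 = transpose_mat W * A * W"
  have A1: "A1 \<in> carrier_mat ?n ?n" unfolding A1_def using W A by simp
  have sym1: "transpose_mat A1 = A1"
  proof -
    have WA: "transpose_mat W * A \<in> carrier_mat ?n ?n" using W A by simp
    have "transpose_mat A1 = transpose_mat W * transpose_mat (transpose_mat W * A)"
      unfolding A1_def by (rule transpose_mult[OF WA W])
    also have "transpose_mat (transpose_mat W * A) = transpose_mat A * W"
      using transpose_mult[of "transpose_mat W" ?n ?n A ?n] W A by simp
    also have "transpose_mat W * (transpose_mat A * W) = A1" unfolding A1_def sym
      using W A by (simp add: assoc_mult_mat[of _ ?n ?n _ ?n _ ?n])
    finally show ?thesis .
  qed
  have col0: "\<And>i. i < ?n \<Longrightarrow> A1 $$ (i,0) = (if i = 0 then e else 0)"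
  proof -
    fix i assume i: "i < ?n"
    have "A1 $$ (i,0) = col W i \<bullet> (e \<cdot>\<^sub>v col W 0)" unfolding A1_def
      using conj_form[OF W A i] W0 Av by simp
    also have "\<dots> = e * (col W i \<bullet> col W 0)" using W i by simp
    also have "col W i \<bullet> col W 0 = (transpose_mat W * W) $$ (i, 0)" using W i by simp
    finally show "A1 $$ (i,0) = (if i = 0 then e else 0)" unfolding WW using i by simp
  qed
  define A22 where "A22 = mat m m (\<lambda>(i,j). A1 $$ (i+1,j+1))"
  have A22: "A22 \<in> carrier_mat m m" unfolding A22_def by simp
  have sym22: "transpose_mat A22 = A22"
  proof (rule eq_matI)
    fix i j assume "i < dim_row A22" "j < dim_col A22"
    hence ij: "i < m" "j < m" unfolding A22_def by auto
    have "A1 $$ (j+1, i+1) = A1 $$ (i+1,j+1)" using sym1 A1 ij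
      by (metis Suc_eq_plus1 Suc_less_eq carrier_matD index_transpose_mat(1))
    thus "transpose_mat A22 $$ (i, j) = A22 $$ (i, j)" unfolding A22_def using ij by simp
  qed (auto simp: A22_def)
  have A1b: "A1 = four_block_mat (mat 1 1 (\<lambda>_. e)) (0\<^sub>m 1 m) (0\<^sub>m m 1) A22"
  proof (rule eq_matI)
    fix i j assume "i < dim_row (four_block_mat (mat 1 1 (\<lambda>_. e)) (0\<^sub>m 1 m) (0\<^sub>m m 1) A22)"
        "j < dim_col (four_block_mat (mat 1 1 (\<lambda>_. e)) (0\<^sub>m 1 m) (0\<^sub>m m 1) A22)"
    hence ij: "i < ?n" "j < ?n" using A22 by auto
    have c2: "A1 $$ (0,j) = A1 $$ (j,0)" using sym1 A1 ij
      by (metis carrier_matD index_transpose_mat(1) zero_less_Suc)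
    show "A1 $$ (i, j) = four_block_mat (mat 1 1 (\<lambda>_. e)) (0\<^sub>m 1 m) (0\<^sub>m m 1) A22 $$ (i, j)"
      using ij A22 col0 c2 by (cases i; cases j) (auto simp: A22_def)
  qed (use A1 A22 in auto)
  obtain U2 es2 where U2: "U2 \<in> carrier_mat m m" and UU2: "transpose_mat U2 * U2 = 1\<^sub>m m"
    and les2: "length es2 = m" and A22e: "A22 = U2 * dmat es2 * transpose_mat U2"
    using Suc.IH[OF A22 sym22] by blast
  have D2: "dmat es2 \<in> carrier_mat m m" using les2 dmat_carrier by metis
  define F where "F = four_block_mat (1\<^sub>m 1) (0\<^sub>m 1 m) (0\<^sub>m m 1) U2"
  have F: "F \<in> carrier_mat ?n ?n" unfolding F_def using U2 by auto
  have FT: "transpose_mat F = four_block_mat (1\<^sub>m 1) (0\<^sub>m 1 m) (0\<^sub>m m 1) (transpose_mat U2)"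
    unfolding F_def using U2 by (subst transpose_four_block_mat) auto
  have FF: "transpose_mat F * F = 1\<^sub>m ?n" unfolding FT unfolding F_def using U2 UU2
    by (subst mult_four_block_mat[of _ 1 1 _ m _ m _ _ 1 _ m]) auto
  define D where "D = four_block_mat (mat 1 1 (\<lambda>_. e)) (0\<^sub>m 1 m) (0\<^sub>m m 1) (dmat es2)"
  have Dd: "D = dmat (e # es2)"
    unfolding D_def dmat_def using les2 by (intro eq_matI) (auto simp: nth_Cons')
  have Dc: "D \<in> carrier_mat ?n ?n" unfolding Dd using les2 dmat_carrier by (metis length_Cons)
  have A1F: "A1 = F * D * transpose_mat F"
    unfolding A1b FT unfolding F_def D_def using U2 D2 A22e
    apply (subst mult_four_block_mat[of _ 1 1 _ m _ m _ _ 1 _ m], auto)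
    apply (subst mult_four_block_mat[of _ 1 1 _ m _ m _ _ 1 _ m], auto)
    done
  define U where "U = W * F"
  have U: "U \<in> carrier_mat ?n ?n" unfolding U_def using W F by simp
  have UT: "transpose_mat U = transpose_mat F * transpose_mat W"
    unfolding U_def using W F by (simp add: transpose_mult[of _ ?n ?n])
  have "transpose_mat U * U = (transpose_mat F * transpose_mat W) * (W * F)"
    unfolding UT by (simp add: U_def)
  also have "\<dots> = transpose_mat F * (transpose_mat W * W) * F"
    using W F by (simp add: assoc_mult_mat[of _ ?n ?n _ ?n _ ?n])
  also have "\<dots> = 1\<^sub>m ?n" unfolding WW using F FF by simp
  finally have UU: "transpose_mat U * U = 1\<^sub>m ?n" .
  have "A = (W * transpose_mat W) * A * (W * transpose_mat W)" unfolding WW' using A by simp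
  also have "\<dots> = W * A1 * transpose_mat W" unfolding A1_def using W A
    by (simp add: assoc_mult_mat[of _ ?n ?n _ ?n _ ?n])
  also have "\<dots> = (W * F) * D * (transpose_mat F * transpose_mat W)" unfolding A1F
    using W F Dc by (simp add: assoc_mult_mat[of _ ?n ?n _ ?n _ ?n])
  also have "\<dots> = U * D * transpose_mat U" unfolding UT by (simp add: U_def)
  finally have "A = U * dmat (e # es2) * transpose_mat U" unfolding Dd .
  thus ?case using U UU les2 by (intro exI[of _ U] exI[of _ "e # es2"]) auto
qed



lemma proots_linprod: "proots (\<Prod>a\<leftarrow>es. [:- a, 1:]) = mset (es :: real list)"
proof (induction es)
  case Nil thus ?case by simp
next
  case (Cons a es)
  define P where "P = (\<Prod>a\<leftarrow>es. [:- a, 1:])"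
  have lf: "\<And>a. [:- a, 1:] \<noteq> (0 :: real poly)" by simp
  have P0: "P \<noteq> 0"
    unfolding P_def prod_list_zero_iff using lf by auto
  have "(\<Prod>a\<leftarrow>a # es. [:- a, 1:]) = [:- a, 1:] * P" unfolding P_def by (simp only: list.map prod_list.Cons)
  hence "proots (\<Prod>a\<leftarrow>a # es. [:- a, 1:]) = proots [:- a, 1:] + proots P"
    using proots_mult[OF lf P0] by simp
  also have "proots [:- a, 1:] = {#a#}" using proots_linear_factor[of "-a"] by simp
  also have "proots P = mset es" using Cons unfolding P_def .
  finally show ?case by simp
qed

context
  fixes A U :: "real mat" and es :: "real list" and n :: nat
  assumes U: "U \<in> carrier_mat n n" and UU: "transpose_mat U * U = 1\<^sub>m n"
    and les: "length es = n" and AU: "A = U * dmat es * transpose_mat U"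
begin

lemma D: "dmat es \<in> carrier_mat n n" using les dmat_carrier by metis

lemma UU': "U * transpose_mat U = 1\<^sub>m n"
  by (rule mat_mult_left_right_inverse[OF _ U UU]) (use U in simp)

lemma Ac: "A \<in> carrier_mat n n" unfolding AU using U D by simp

lemma sev: "sorted_eigenvalues A = sort es"
proof -
  have "similar_mat A (dmat es)"
    by (rule similar_matI[of A "dmat es" U "transpose_mat U" n], insert U D UU UU' AU Ac, auto)
  hence "char_poly A = char_poly (dmat es)" by (rule char_poly_similar)
  also have "\<dots> = (\<Prod>a\<leftarrow>diag_mat (dmat es). [:- a, 1:])"
    by (rule char_poly_upper_triangular[OF D]) (auto simp: upper_triangular_def dmat_def)
  also have "diag_mat (dmat es) = es" unfolding diag_mat_def dmat_def
    by (rule nth_equalityI) auto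
  finally show ?thesis unfolding sorted_eigenvalues_def using proots_linprod by simp
qed

lemma yv: "x \<in> carrier_vec n \<Longrightarrow> j < n \<Longrightarrow> (transpose_mat U *\<^sub>v x) $ j = col U j \<bullet> x"
  using U by simp

lemma Dv: "y \<in> carrier_vec n \<Longrightarrow> dmat es *\<^sub>v y = vec n (\<lambda>j. es!j * y$j)"
proof (rule eq_vecI)
  fix j assume y: "y \<in> carrier_vec n" and j: "j < dim_vec (vec n (\<lambda>j. es ! j * y $ j))"
  hence j: "j < n" by simp
  have "row (dmat es) j \<bullet> y = (\<Sum>k<n. (if j = k then es!j else 0) * y$k)"
    unfolding scalar_prod_def dmat_def using y j les by (auto simp: lessThan_atLeast0 intro!: sum.cong)
  also have "\<dots> = (\<Sum>k<n. if k = j then es!j * y$j else 0)" by (rule sum.cong) auto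
  also have "\<dots> = es!j * y$j" using j by simp
  finally show "(dmat es *\<^sub>v y) $ j = vec n (\<lambda>j. es ! j * y $ j) $ j" using j D by simp
qed (use D in auto)

lemma quad: assumes x: "x \<in> carrier_vec n"
  shows "x \<bullet> (A *\<^sub>v x) = (\<Sum>j<n. es!j * (col U j \<bullet> x)^2)"
proof -
  define y where "y = transpose_mat U *\<^sub>v x"
  have y: "y \<in> carrier_vec n" unfolding y_def using U x by simp
  have "A *\<^sub>v x = U *\<^sub>v (dmat es *\<^sub>v y)" unfolding AU y_def using U D x
    by (simp add: assoc_mult_mat_vec[of _ n n _ n])
  have eq: "y \<bullet> z = x \<bullet> (U *\<^sub>v z)" if "z \<in> carrier_vec n" for z
    unfolding y_def by (rule transpose_vec_mult_scalar[OF U that x])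
  hence "x \<bullet> (A *\<^sub>v x) = y \<bullet> (dmat es *\<^sub>v y)" using \<open>A *\<^sub>v x = _\<close> D y by simp
  also have "\<dots> = (\<Sum>j<n. y$j * (es!j * y$j))" unfolding Dv[OF y] scalar_prod_def using y
    by (simp add: lessThan_atLeast0)
  also have "\<dots> = (\<Sum>j<n. es!j * (col U j \<bullet> x)^2)" unfolding y_def
    by (intro sum.cong refl) (use yv x in \<open>auto simp: power2_eq_square\<close>)
  finally show ?thesis .
qed

lemma normU: assumes x: "x \<in> carrier_vec n"
  shows "x \<bullet> x = (\<Sum>j<n. (col U j \<bullet> x)^2)"
proof -
  define y where "y = transpose_mat U *\<^sub>v x"
  have y: "y \<in> carrier_vec n" unfolding y_def using U x by simp
  have "x = (U * transpose_mat U) *\<^sub>v x" unfolding UU' using x by simp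
  also have "\<dots> = U *\<^sub>v y" unfolding y_def using U x by simp
  finally have "x \<bullet> x = x \<bullet> (U *\<^sub>v y)" by simp
  also have "\<dots> = y \<bullet> y" unfolding y_def
    by (rule transpose_vec_mult_scalar[OF U _ x, symmetric]) (use U x in simp)
  also have "\<dots> = (\<Sum>j<n. (y $ j)^2)" unfolding scalar_prod_def[of y y] using y
    by (auto simp: lessThan_atLeast0 power2_eq_square)
  also have "\<dots> = (\<Sum>j<n. (col U j \<bullet> x)^2)" unfolding y_def
    by (intro sum.cong refl) (use yv x in auto)
  finally show ?thesis .
qed

lemma colc: "j < n \<Longrightarrow> col U j \<in> carrier_vec n" using U by simp

lemma orthn: "i < n \<Longrightarrow> j < n \<Longrightarrow> col U i \<bullet> col U j = (if i = j then 1 else 0)"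
proof -
  assume i: "i < n" and j: "j < n"
  have "(transpose_mat U * U) $$ (i,j) = col U i \<bullet> col U j" using U i j by simp
  thus ?thesis unfolding UU using i j by simp
qed

lemma eigvec: assumes j: "j < n" shows "A *\<^sub>v col U j = es!j \<cdot>\<^sub>v col U j"
proof -
  have c: "transpose_mat U *\<^sub>v col U j = unit_vec n j"
  proof (rule eq_vecI)
    fix i assume "i < dim_vec (unit_vec n j)" hence i: "i < n" by simp
    show "(transpose_mat U *\<^sub>v col U j) $ i = unit_vec n j $ i"
      using yv[OF colc[OF j] i] orthn[OF i j] i j by (simp add: unit_vec_def)
  qed (use U in simp)
  have "A *\<^sub>v col U j = U *\<^sub>v (dmat es *\<^sub>v unit_vec n j)" unfolding AU
    using U D j c by (simp add: assoc_mult_mat_vec[of _ n n _ n])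
  also have "dmat es *\<^sub>v unit_vec n j = es!j \<cdot>\<^sub>v unit_vec n j"
    unfolding Dv[OF unit_vec_carrier] by (rule eq_vecI) (auto simp: unit_vec_def)
  also have "U *\<^sub>v (es!j \<cdot>\<^sub>v unit_vec n j) = es!j \<cdot>\<^sub>v col U j"
  proof -
    have "U *\<^sub>v unit_vec n j = col U j" by (rule eq_vecI) (use U j in auto)
    thus ?thesis using U j by (simp add: mult_mat_vec)
  qed
  finally show ?thesis .
qed

end


lemma sort_perm:
  fixes xs :: "real list"
  obtains p where "p permutes {..<length xs}" "\<And>k. k < length xs \<Longrightarrow> sort xs ! k = xs ! p k"
proof -
  obtain p where p: "p permutes {..<length xs}" "permute_list p xs = sort xs"
    using mset_eq_permutation[of "sort xs" xs] by auto
  have "\<And>k. k < length xs \<Longrightarrow> sort xs ! k = xs ! p k"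
    using permute_list_nth[OF p(1)] p(2) by metis
  thus ?thesis using p(1) that by blast
qed

lemma weyl:
  fixes A B :: "real mat"
  assumes A: "A \<in> carrier_mat n n" "transpose_mat A = A"
    and B: "B \<in> carrier_mat n n" "transpose_mat B = B" and n: "n \<ge> 2"
    and le: "\<And>x. x \<in> carrier_vec n \<Longrightarrow> x \<bullet> (A *\<^sub>v x) \<le> x \<bullet> (B *\<^sub>v x)"
  shows "eigval A 2 \<le> eigval B 2 \<and> eigval A n \<le> eigval B n"
proof -
  obtain UA esA where UA: "UA \<in> carrier_mat n n" and UUA: "transpose_mat UA * UA = 1\<^sub>m n"
    and lesA: "length esA = n" and AUA: "A = UA * dmat esA * transpose_mat UA"
    using spectral[OF A] by blast
  obtain UB esB where UB: "UB \<in> carrier_mat n n" and UUB: "transpose_mat UB * UB = 1\<^sub>m n"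
    and lesB: "length esB = n" and BUB: "B = UB * dmat esB * transpose_mat UB"
    using spectral[OF B] by blast
  note sA = UA UUA lesA AUA and sB = UB UUB lesB BUB
  have eA: "\<And>k. eigval A k = sort esA ! (k - 1)" unfolding eigval_def sev[OF sA] ..
  have eB: "\<And>k. eigval B k = sort esB ! (k - 1)" unfolding eigval_def sev[OF sB] ..
  obtain pA where pA: "pA permutes {..<n}" "\<And>k. k < n \<Longrightarrow> sort esA ! k = esA ! pA k"
    using sort_perm[of esA] lesA by metis
  obtain pB where pB: "pB permutes {..<n}" "\<And>k. k < n \<Longrightarrow> sort esB ! k = esB ! pB k"
    using sort_perm[of esB] lesB by metis
  have srtA: "sorted (sort esA)" and srtB: "sorted (sort esB)" by simp_all
  have pAr: "\<And>k. k < n \<Longrightarrow> pA k < n" using pA(1) by (meson lessThan_iff permutes_in_image)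
  have pBr: "\<And>k. k < n \<Longrightarrow> pB k < n" using pB(1) by (meson lessThan_iff permutes_in_image)
  have pAs: "\<exists>k<n. j = pA k" if "j < n" for j
  proof -
    have "j \<in> pA ` {..<n}" using permutes_image[OF pA(1)] that by simp
    thus ?thesis by auto
  qed
  have pBs: "\<exists>k<n. j = pB k" if "j < n" for j
  proof -
    have "j \<in> pB ` {..<n}" using permutes_image[OF pB(1)] that by simp
    thus ?thesis by auto
  qed
  have maxB: "\<And>j. j < n \<Longrightarrow> esB ! j \<le> sort esB ! (n - 1)"
  proof -
    fix j assume j: "j < n"
    then obtain k where k: "k < n" "j = pB k" using pBs by blast
    have "esB ! j = sort esB ! k" using pB(2)[OF k(1)] k(2) by simp
    also have "\<dots> \<le> sort esB ! (n - 1)" by (rule sorted_nth_mono[OF srtB]) (use k n lesB in auto)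
    finally show "esB ! j \<le> sort esB ! (n - 1)" .
  qed
  have last: "eigval A n \<le> eigval B n"
  proof -
    define j where "j = pA (n - 1)"
    have j: "j < n" unfolding j_def using pAr n by simp
    define x where "x = col UA j"
    have x: "x \<in> carrier_vec n" unfolding x_def using colc[OF sA j] .
    have xx: "x \<bullet> x = 1" unfolding x_def using orthn[OF sA j j] by simp
    have "x \<bullet> (A *\<^sub>v x) = esA ! j" unfolding x_def eigvec[OF sA j] using colc[OF sA j] xx[unfolded x_def]
      by simp
    also have "esA ! j = eigval A n" unfolding eA j_def using pA(2)[of "n - 1"] n by simp
    finally have 1: "eigval A n = x \<bullet> (A *\<^sub>v x)" by simp
    have "x \<bullet> (B *\<^sub>v x) = (\<Sum>i<n. esB!i * (col UB i \<bullet> x)^2)" by (rule quad[OF sB x])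
    also have "\<dots> \<le> (\<Sum>i<n. sort esB ! (n - 1) * (col UB i \<bullet> x)^2)"
      by (intro sum_mono mult_right_mono maxB) auto
    also have "\<dots> = sort esB ! (n - 1) * (x \<bullet> x)" unfolding normU[OF sB x] sum_distrib_left ..
    finally have 2: "x \<bullet> (B *\<^sub>v x) \<le> eigval B n" unfolding eB xx by simp
    show ?thesis using 1 2 le[OF x] by simp
  qed
  define i0 where "i0 = pA 0"
  have i0: "i0 < n" unfolding i0_def using pAr n by simp
  have geA: "\<And>j. j < n \<Longrightarrow> j \<noteq> i0 \<Longrightarrow> sort esA ! 1 \<le> esA ! j"
  proof -
    fix j assume j: "j < n" "j \<noteq> i0"
    then obtain k where k: "k < n" "j = pA k" using pAs by blast
    have "k \<noteq> 0"
    proof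
      assume "k = 0" thus False using j(2) k unfolding i0_def by simp
    qed
    have "sort esA ! 1 \<le> sort esA ! k" by (rule sorted_nth_mono[OF srtA]) (use k \<open>k \<noteq> 0\<close> lesA in auto)
    also have "\<dots> = esA ! j" using pA(2)[OF k(1)] k(2) by simp
    finally show "sort esA ! 1 \<le> esA ! j" .
  qed
  define p0 where "p0 = pB 0"
  define p1 where "p1 = pB 1"
  have p0: "p0 < n" and p1: "p1 < n" unfolding p0_def p1_def using pBr n by auto
  have p01: "p0 \<noteq> p1" unfolding p0_def p1_def using pB(1)
    using permutes_inj[OF pB(1)] by (metis injD zero_neq_one)
  have leB: "\<And>j. j \<in> {p0, p1} \<Longrightarrow> esB ! j \<le> sort esB ! 1"
  proof -
    fix j assume "j \<in> {p0, p1}"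
    moreover have "esB ! p1 = sort esB ! 1" unfolding p1_def using pB(2)[of 1] n by simp
    moreover have "esB ! p0 = sort esB ! 0" unfolding p0_def using pB(2)[of 0] n by simp
    moreover have "sort esB ! 0 \<le> sort esB ! 1" by (rule sorted_nth_mono[OF srtB]) (use n lesB in auto)
    ultimately show "esB ! j \<le> sort esB ! 1" by auto
  qed
  define v1 where "v1 = col UA i0"
  define u1 where "u1 = col UB p0"
  define u2 where "u2 = col UB p1"
  have v1: "v1 \<in> carrier_vec n" unfolding v1_def using colc[OF sA i0] .
  have u1: "u1 \<in> carrier_vec n" unfolding u1_def using colc[OF sB p0] .
  have u2: "u2 \<in> carrier_vec n" unfolding u2_def using colc[OF sB p1] .
  have key: "sort esA ! 1 \<le> sort esB ! 1"
    if ab: "\<alpha>^2 + \<beta>^2 > 0" and orth: "v1 \<bullet> (\<alpha> \<cdot>\<^sub>v u1 + \<beta> \<cdot>\<^sub>v u2) = 0" for \<alpha> \<beta>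
  proof -
    define x where "x = \<alpha> \<cdot>\<^sub>v u1 + \<beta> \<cdot>\<^sub>v u2"
    have x: "x \<in> carrier_vec n" unfolding x_def using u1 u2 by simp
    have cx: "col UB j \<bullet> x = \<alpha> * (col UB j \<bullet> u1) + \<beta> * (col UB j \<bullet> u2)" if j: "j < n" for j
    proof -
      have cj: "col UB j \<in> carrier_vec n" using colc[OF sB j] .
      show ?thesis unfolding x_def using u1 u2 cj
        by (simp add: scalar_prod_add_distrib[of _ n] carrier_vecD)
    qed
    have c: "\<And>j. j < n \<Longrightarrow> col UB j \<bullet> x = (if j = p0 then \<alpha> else 0) + (if j = p1 then \<beta> else 0)"
      unfolding cx u1_def u2_def using orthn[OF sB] p0 p1 by simp
    have xx: "x \<bullet> x = (\<Sum>j<n. (col UB j \<bullet> x)^2)" by (rule normU[OF sB x])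
    have "x \<bullet> x \<ge> (col UB p0 \<bullet> x)^2" unfolding xx
      by (rule member_le_sum) (use p0 in auto)
    hence "x \<bullet> x \<ge> \<alpha>^2" using c[OF p0] p01 by simp
    moreover have "x \<bullet> x \<ge> (col UB p1 \<bullet> x)^2" unfolding xx
      by (rule member_le_sum) (use p1 in auto)
    hence "x \<bullet> x \<ge> \<beta>^2" using c[OF p1] p01 by simp
    ultimately have xpos: "x \<bullet> x > 0" using ab by linarith
    have "x \<bullet> (B *\<^sub>v x) = (\<Sum>j<n. esB!j * (col UB j \<bullet> x)^2)" by (rule quad[OF sB x])
    also have "\<dots> \<le> (\<Sum>j<n. sort esB ! 1 * (col UB j \<bullet> x)^2)"
    proof (rule sum_mono)
      fix j assume j: "j \<in> {..<n}"
      show "esB!j * (col UB j \<bullet> x)^2 \<le> sort esB ! 1 * (col UB j \<bullet> x)^2"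
      proof (cases "j \<in> {p0, p1}")
        case True thus ?thesis using leB by (intro mult_right_mono) auto
      next
        case False thus ?thesis using c j by auto
      qed
    qed
    also have "\<dots> = sort esB ! 1 * (x \<bullet> x)" unfolding xx sum_distrib_left ..
    finally have bB: "x \<bullet> (B *\<^sub>v x) \<le> sort esB ! 1 * (x \<bullet> x)" .
    have xv1: "col UA i0 \<bullet> x = 0" using orth unfolding x_def v1_def .
    have "sort esA ! 1 * (x \<bullet> x) = (\<Sum>j<n. sort esA ! 1 * (col UA j \<bullet> x)^2)"
      unfolding normU[OF sA x] sum_distrib_left ..
    also have "\<dots> \<le> (\<Sum>j<n. esA!j * (col UA j \<bullet> x)^2)"
    proof (rule sum_mono)
      fix j assume j: "j \<in> {..<n}"
      show "sort esA ! 1 * (col UA j \<bullet> x)^2 \<le> esA!j * (col UA j \<bullet> x)^2"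
      proof (cases "j = i0")
        case True thus ?thesis using xv1 by simp
      next
        case False thus ?thesis using geA j by (intro mult_right_mono) auto
      qed
    qed
    also have "\<dots> = x \<bullet> (A *\<^sub>v x)" by (rule quad[OF sA x, symmetric])
    finally have bA: "sort esA ! 1 * (x \<bullet> x) \<le> x \<bullet> (A *\<^sub>v x)" .
    have "sort esA ! 1 * (x \<bullet> x) \<le> sort esB ! 1 * (x \<bullet> x)" using bA bB le[OF x] by simp
    thus ?thesis using xpos by simp
  qed
  define a where "a = v1 \<bullet> u1"
  define b where "b = v1 \<bullet> u2"
  have sec: "sort esA ! 1 \<le> sort esB ! 1"
  proof (cases "a = 0 \<and> b = 0")
    case True
    show ?thesis
    proof (rule key[of 1 0])
      show "v1 \<bullet> (1 \<cdot>\<^sub>v u1 + 0 \<cdot>\<^sub>v u2) = 0" using True u1 u2 v1 unfolding a_def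
        by (simp add: scalar_prod_add_distrib[of _ n])
    qed simp
  next
    case False
    show ?thesis
    proof (rule key[of b "- a"])
      show "0 < b^2 + (- a)^2" using False sum_power2_gt_zero_iff[of b "-a"] by auto
      show "v1 \<bullet> (b \<cdot>\<^sub>v u1 + (- a) \<cdot>\<^sub>v u2) = 0" using u1 u2 v1 unfolding a_def b_def
        by (simp add: scalar_prod_add_distrib[of _ n])
    qed
  qed
  show ?thesis using last sec unfolding eA eB by simp
qed



lemma walk_rev:
  assumes sg: "simple_graph E N" and w: "is_walk E N xs"
  shows "is_walk E N (rev xs)"
proof -
  have s: "\<And>a b. E a b \<Longrightarrow> E b a" using sg unfolding simple_graph_def by blast
  have w1: "xs \<noteq> []" "set xs \<subseteq> {..<N}" and w2: "\<And>k. k + 1 < length xs \<Longrightarrow> E (xs ! k) (xs ! (k + 1))"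
    using w unfolding is_walk_def by auto
  show ?thesis unfolding is_walk_def
  proof (intro conjI allI impI)
    fix k assume k: "k + 1 < length (rev xs)"
    define l where "l = length xs"
    have kl: "k + 1 < l" using k unfolding l_def by simp
    have e1: "E (xs ! (l - 2 - k)) (xs ! (l - 2 - k + 1))" using w2[of "l - 2 - k"] kl unfolding l_def by simp
    have a1: "l - 2 - k + 1 = l - 1 - k" using kl by simp
    have a2: "l - 1 - (k + 1) = l - 2 - k" by simp
    have "E (xs ! (l - 1 - k)) (xs ! (l - 1 - (k + 1)))" unfolding a2 using s[OF e1] unfolding a1 .
    thus "E (rev xs ! k) (rev xs ! (k + 1))" using kl unfolding l_def by (simp add: rev_nth)
  qed (use w1 in auto)
qed

lemma gdist_sym:
  assumes sg: "simple_graph E N"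
  shows "gdist E N i j = gdist E N j i"
proof -
  have "\<And>i j k. (\<exists>xs. is_walk E N xs \<and> hd xs = i \<and> last xs = j \<and> length xs = k + 1) \<Longrightarrow>
               (\<exists>xs. is_walk E N xs \<and> hd xs = j \<and> last xs = i \<and> length xs = k + 1)"
  proof -
    fix i j k assume "\<exists>xs. is_walk E N xs \<and> hd xs = i \<and> last xs = j \<and> length xs = k + 1"
    then obtain xs where xs: "is_walk E N xs" "hd xs = i" "last xs = j" "length xs = k + 1" by blast
    have ne: "xs \<noteq> []" using xs(1) unfolding is_walk_def by simp
    show "\<exists>xs. is_walk E N xs \<and> hd xs = j \<and> last xs = i \<and> length xs = k + 1"
      by (rule exI[of _ "rev xs"]) (use walk_rev[OF sg xs(1)] xs ne in \<open>auto simp: hd_rev last_rev\<close>)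
  qed
  hence "\<And>k. (\<exists>xs. is_walk E N xs \<and> hd xs = i \<and> last xs = j \<and> length xs = k + 1) =
               (\<exists>xs. is_walk E N xs \<and> hd xs = j \<and> last xs = i \<and> length xs = k + 1)" by blast
  thus ?thesis unfolding gdist_def by simp
qed

lemma wlap_carrier: "wlaplacian N w \<in> carrier_mat N N" unfolding wlaplacian_def by simp

lemma wlap_sym: assumes "\<And>i j. w i j = w j i" shows "transpose_mat (wlaplacian N w) = wlaplacian N w"
  by (rule eq_matI) (auto simp: wlaplacian_def assms)

lemma wlap_mult: assumes x: "x \<in> carrier_vec N" and i: "i < N"
  shows "(wlaplacian N w *\<^sub>v x) $ i = (\<Sum>j<N. w i j * (x$i - x$j))"
proof -
  have "(wlaplacian N w *\<^sub>v x) $ i = (\<Sum>j<N. wlaplacian N w $$ (i,j) * x$j)"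
    using x i by (simp add: wlaplacian_def scalar_prod_def lessThan_atLeast0)
  also have "\<dots> = wlaplacian N w $$ (i,i) * x$i + (\<Sum>j\<in>{..<N} - {i}. wlaplacian N w $$ (i,j) * x$j)"
    using i by (subst sum.remove[of _ i]) auto
  also have "\<dots> = (\<Sum>k\<in>{..<N} - {i}. w i k) * x$i + (\<Sum>j\<in>{..<N} - {i}. - w i j * x$j)"
    using i by (auto simp: wlaplacian_def intro!: sum.cong)
  also have "\<dots> = (\<Sum>j\<in>{..<N} - {i}. w i j * (x$i - x$j))"
    by (simp add: right_diff_distrib sum_subtractf sum_distrib_right sum_negf)
  also have "\<dots> = (\<Sum>j<N. w i j * (x$i - x$j))"
    using i by (subst (2) sum.remove[of _ i]) auto
  finally show ?thesis .
qed

lemma wlap_quad: assumes x: "x \<in> carrier_vec N" and symw: "\<And>i j. w i j = w j i"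
  shows "2 * (x \<bullet> (wlaplacian N w *\<^sub>v x)) = (\<Sum>i<N. \<Sum>j<N. w i j * (x$i - x$j)^2)"
proof -
  define Q where "Q = (\<Sum>i<N. \<Sum>j<N. w i j * (x$i * (x$i - x$j)))"
  have dim: "dim_vec (wlaplacian N w *\<^sub>v x) = N" using wlap_carrier[of N w] by simp
  have "x \<bullet> (wlaplacian N w *\<^sub>v x) = (\<Sum>i<N. x$i * (wlaplacian N w *\<^sub>v x)$i)"
    unfolding scalar_prod_def dim lessThan_atLeast0 ..
  also have "\<dots> = Q" unfolding Q_def
    by (intro sum.cong refl) (use x in \<open>simp add: wlap_mult sum_distrib_left mult_ac\<close>)
  finally have q: "x \<bullet> (wlaplacian N w *\<^sub>v x) = Q" .
  have "Q = (\<Sum>j<N. \<Sum>i<N. w i j * (x$i * (x$i - x$j)))" unfolding Q_def by (rule sum.swap)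
  also have "\<dots> = (\<Sum>i<N. \<Sum>j<N. w i j * (x$j * (x$j - x$i)))"
    by (intro sum.cong refl) (use symw in metis)
  finally have "2 * Q = (\<Sum>i<N. \<Sum>j<N. w i j * (x$i * (x$i - x$j))) + (\<Sum>i<N. \<Sum>j<N. w i j * (x$j * (x$j - x$i)))"
    unfolding Q_def by simp
  also have "\<dots> = (\<Sum>i<N. \<Sum>j<N. w i j * (x$i - x$j)^2)"
  proof -
    have e: "\<And>i j. w i j * (x$i * (x$i - x$j)) + w i j * (x$j * (x$j - x$i)) = w i j * (x$i - x$j)^2"
      by (simp add: power2_eq_square algebra_simps)
    show ?thesis unfolding sum.distrib[symmetric] e ..
  qed
  finally show ?thesis using q by simp
qed

lemma wlap_mono: assumes x: "x \<in> carrier_vec N" and symw: "\<And>i j. w i j = w j i" and symw': "\<And>i j. w' i j = w' j i"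
  and le: "\<And>i j. i < N \<Longrightarrow> j < N \<Longrightarrow> i \<noteq> j \<Longrightarrow> w i j \<le> w' i j"
  shows "x \<bullet> (wlaplacian N w *\<^sub>v x) \<le> x \<bullet> (wlaplacian N w' *\<^sub>v x)"
proof -
  have "(\<Sum>i<N. \<Sum>j<N. w i j * (x$i - x$j)^2) \<le> (\<Sum>i<N. \<Sum>j<N. w' i j * (x$i - x$j)^2)"
  proof (intro sum_mono)
    fix i j assume "i \<in> {..<N}" "j \<in> {..<N}"
    thus "w i j * (x$i - x$j)^2 \<le> w' i j * (x$i - x$j)^2"
      using le by (cases "i = j") (auto intro: mult_right_mono)
  qed
  thus ?thesis using wlap_quad[where w=w, OF x symw] wlap_quad[where w=w', OF x symw'] by simp
qed



lemma main_gen: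
  assumes N: "N \<ge> 2" and sw: "\<And>i j. w i j = w j i" and sw': "\<And>i j. w' i j = w' j i"
    and le: "\<And>i j. i < N \<Longrightarrow> j < N \<Longrightarrow> i \<noteq> j \<Longrightarrow> w i j \<le> w' i j"
  shows "eigval (wlaplacian N w') 2 \<ge> eigval (wlaplacian N w) 2 \<and>
         eigval (wlaplacian N w') N \<ge> eigval (wlaplacian N w) N"
proof -
  have "eigval (wlaplacian N w) 2 \<le> eigval (wlaplacian N w') 2 \<and>
        eigval (wlaplacian N w) N \<le> eigval (wlaplacian N w') N"
  proof (rule weyl[OF wlap_carrier wlap_sym wlap_carrier wlap_sym N])
    show "\<And>i j. w i j = w j i" by (rule sw)
    show "\<And>i j. w' i j = w' j i" by (rule sw')
    fix x :: "real vec" assume x: "x \<in> carrier_vec N"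
    show "x \<bullet> (wlaplacian N w *\<^sub>v x) \<le> x \<bullet> (wlaplacian N w' *\<^sub>v x)"
      by (rule wlap_mono[OF x sw sw' le])
  qed
  thus ?thesis by simp
qed

theorem lemma3:
  fixes E :: "nat \<Rightarrow> nat \<Rightarrow> bool" and N :: nat
  assumes "N \<ge> 2" and "simple_graph E N" and "graph_connected E N"
  shows "(\<forall>s s'. 0 < s' \<and> s' < s \<longrightarrow>
            eigval (wlaplacian N (mellin_weight E N s')) 2 \<ge> eigval (wlaplacian N (mellin_weight E N s)) 2 \<and>
            eigval (wlaplacian N (mellin_weight E N s')) N \<ge> eigval (wlaplacian N (mellin_weight E N s)) N)
       \<and> (\<forall>l l'. 0 < l' \<and> l' < l \<longrightarrow>
            eigval (wlaplacian N (laplace_weight E N l')) 2 \<ge> eigval (wlaplacian N (laplace_weight E N l)) 2 \<and>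
            eigval (wlaplacian N (laplace_weight E N l')) N \<ge> eigval (wlaplacian N (laplace_weight E N l)) N)"
proof (intro conjI allI impI)
  have Es: "\<And>i j. E i j = E j i" using assms(2) unfolding simple_graph_def by blast
  have gs: "\<And>i j. gdist E N i j = gdist E N j i" using gdist_sym[OF assms(2)] by blast
  have msym: "\<And>s i j. mellin_weight E N s i j = mellin_weight E N s j i"
    unfolding mellin_weight_def using gs by simp
  have lsym: "\<And>l i j. laplace_weight E N l i j = laplace_weight E N l j i"
    unfolding laplace_weight_def using gs Es by simp
  have mle: "mellin_weight E N s i j \<le> mellin_weight E N s' i j" if "s' < s" for s s' i j
  proof (cases "gdist E N i j = 0")
    case True thus ?thesis unfolding mellin_weight_def by simp
  next
    case False
    hence "real (gdist E N i j) \<ge> 1" by simp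
    thus ?thesis unfolding mellin_weight_def using that by (intro powr_mono) auto
  qed
  have lle: "laplace_weight E N l i j \<le> laplace_weight E N l' i j" if "l' < l" for l l' i j
  proof -
    have "l' * real (gdist E N i j) \<le> l * real (gdist E N i j)"
      using that by (intro mult_right_mono) auto
    thus ?thesis unfolding laplace_weight_def by simp
  qed
  fix s s' :: real assume ss: "0 < s' \<and> s' < s"
  have r: "eigval (wlaplacian N (mellin_weight E N s')) 2 \<ge> eigval (wlaplacian N (mellin_weight E N s)) 2 \<and>
            eigval (wlaplacian N (mellin_weight E N s')) N \<ge> eigval (wlaplacian N (mellin_weight E N s)) N"
    by (rule main_gen[OF assms(1) msym msym mle]) (use ss in auto)
  show "eigval (wlaplacian N (mellin_weight E N s')) 2 \<ge> eigval (wlaplacian N (mellin_weight E N s)) 2"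
    using r by simp
  show "eigval (wlaplacian N (mellin_weight E N s')) N \<ge> eigval (wlaplacian N (mellin_weight E N s)) N"
    using r by simp
next
  have Es: "\<And>i j. E i j = E j i" using assms(2) unfolding simple_graph_def by blast
  have gs: "\<And>i j. gdist E N i j = gdist E N j i" using gdist_sym[OF assms(2)] by blast
  have lsym: "\<And>l i j. laplace_weight E N l i j = laplace_weight E N l j i"
    unfolding laplace_weight_def using gs Es by simp
  have lle: "laplace_weight E N l i j \<le> laplace_weight E N l' i j" if "l' < l" for l l' i j
  proof -
    have "l' * real (gdist E N i j) \<le> l * real (gdist E N i j)"
      using that by (intro mult_right_mono) auto
    thus ?thesis unfolding laplace_weight_def by simp
  qed
  fix l l' :: real assume ll: "0 < l' \<and> l' < l"
  have r: "eigval (wlaplacian N (laplace_weight E N l')) 2 \<ge> eigval (wlaplacian N (laplace_weight E N l)) 2 \<and>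
            eigval (wlaplacian N (laplace_weight E N l')) N \<ge> eigval (wlaplacian N (laplace_weight E N l)) N"
    by (rule main_gen[OF assms(1) lsym lsym lle]) (use ll in auto)
  show "eigval (wlaplacian N (laplace_weight E N l')) 2 \<ge> eigval (wlaplacian N (laplace_weight E N l)) 2"
    using r by simp
  show "eigval (wlaplacian N (laplace_weight E N l')) N \<ge> eigval (wlaplacian N (laplace_weight E N l)) N"
    using r by simp
qed

end
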